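(* Let $s>1$, $\eta(s)=\sum_{k=1}^\infty\frac{1}{(k+1)\ln^s(k+1)}$, let $a_k=\frac{1}{\eta(s)}\cdot\frac{1}{(k+1)\ln^s(k+1)}$ ($k\in\mathbb{N}$), and let $K$ be the associated generalized Cantor set. Then there exist constants $c_1,c_2,b,t_0>0$ with $\ln\ln(b/t)>0$ for $0<t\le t_0$, such that $$c_1(\ln\ln(b/t))^{1-s}\le |K(t)|\le c_2(\ln\ln(b/t))^{1-s}\quad\text{for all } t\in(0,t_0].$$
   Context: Generalized Cantor set for positive $(a_k)$ with $\sum a_k=1$: $K_0=[0,1]$; recursively $K_n$ is obtained from $K_{n-1}$ (a union of $2^{n-1}$ disjoint closed intervals) by removing from each of its intervals the open centered subinterval of length $a_n2^{-(n-1)}$; $K=\bigcap_n K_n$. For $t>0$, $K(t)=\{x\in\mathbb{R}:\operatorname{dist}(x,K)<t\}$ and $|\cdot|$ is Lebesgue measure. *)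

theory Defs
  imports "HOL-Analysis.Analysis"
begin

text \<open>Generalized Cantor set for a sequence a (indexed from 1; a 0 is unused).
  cantor_ivls a n is the set of (left,right) endpoints of the 2^n closed intervals of K_n.
  At step n = Suc m, the open centered subinterval of length a n * 2^(-(n-1)),
  i.e. half-length a n / 2^n, is removed from each interval.\<close>

fun cantor_ivls :: "(nat \<Rightarrow> real) \<Rightarrow> nat \<Rightarrow> (real \<times> real) set" where
  "cantor_ivls a 0 = {(0, 1)}"
| "cantor_ivls a (Suc n) =
     (\<Union>p\<in>cantor_ivls a n.
        {(fst p, (fst p + snd p) / 2 - a (Suc n) / 2 ^ Suc n),
         ((fst p + snd p) / 2 + a (Suc n) / 2 ^ Suc n, snd p)})"

definition cantor_stage :: "(nat \<Rightarrow> real) \<Rightarrow> nat \<Rightarrow> real set" where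
  "cantor_stage a n = (\<Union>p\<in>cantor_ivls a n. {fst p .. snd p})"

definition cantor_set :: "(nat \<Rightarrow> real) \<Rightarrow> real set" where
  "cantor_set a = (\<Inter>n. cantor_stage a n)"

definition cantor_nbhd :: "(nat \<Rightarrow> real) \<Rightarrow> real \<Rightarrow> real set" where
  "cantor_nbhd a t = {x. infdist x (cantor_set a) < t}"

end

theory Submission
  imports Defs "HOL-Analysis.Analysis"
begin


context
  fixes s :: real
  assumes s1: "s > 1"
begin

definition gg :: "real \<Rightarrow> real" where "gg x = 1 / (x * ln x powr s)"
definition FF :: "real \<Rightarrow> real" where "FF x = ln x powr (1 - s) / (s - 1)"

lemma gg_mono: "1 < x \<Longrightarrow> x \<le> y \<Longrightarrow> gg y \<le> gg x"
proof -
  assume xy: "1 < x" "x \<le> y"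
  have "ln x \<le> ln y" using xy by simp
  have "ln x powr s \<le> ln y powr s" using xy s1 by (intro powr_mono2) auto
  moreover have "0 < ln x powr s" using xy by simp
  ultimately have "x * ln x powr s \<le> y * ln y powr s" using xy by (intro mult_mono) auto
  moreover have "0 < x * ln x powr s" using xy by simp
  ultimately show "gg y \<le> gg x" unfolding gg_def using s1 by (intro divide_left_mono) auto
qed

lemma aux_eq: "L > 0 \<Longrightarrow> y > 0 \<Longrightarrow> (1 - s) * (1 / L) * (1 / y) / (s - 1) = - (1 / (y * L))"
  using s1 by (simp add: field_simps)

lemma FF_deriv: "1 < y \<Longrightarrow> (FF has_real_derivative - gg y) (at y)"
proof -
  assume y: "1 < y"
  have ly: "ln y > 0" using y by simp
  have d1: "(ln has_real_derivative 1 / y) (at y)" using y by (intro DERIV_ln_divide) simp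
  have d2: "((\<lambda>z. z powr (1 - s)) has_real_derivative (1 - s) * ln y powr (1 - s - 1)) (at (ln y))"
    using ly by (rule has_real_derivative_powr)
  have "((\<lambda>z. ln z powr (1 - s)) has_real_derivative (1 - s) * ln y powr (1 - s - 1) * (1 / y)) (at y)"
    using DERIV_chain2[OF d2 d1] .
  then have "((\<lambda>z. ln z powr (1 - s) / (s - 1)) has_real_derivative (1 - s) * ln y powr (1 - s - 1) * (1 / y) / (s - 1)) (at y)"
    by (rule DERIV_cdivide)
  moreover have E1: "ln y powr (1 - s - 1) = 1 / ln y powr s" using ly by (simp add: powr_minus_divide)
  moreover have E2: "(1 - s) * (1 / ln y powr s) * (1 / y) / (s - 1) = - gg y"
    unfolding gg_def using ly y by (intro aux_eq) auto
  ultimately have "((\<lambda>z. ln z powr (1 - s) / (s - 1)) has_real_derivative - gg y) (at y)"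
    by (simp only: E1 E2)
  then show ?thesis unfolding FF_def[abs_def] .
qed

lemma FG: assumes x: "1 < x" shows "gg (x + 1) \<le> FF x - FF (x + 1)" "FF x - FF (x + 1) \<le> gg x"
proof -
  obtain z where z: "x < z" "z < x + 1" "FF (x + 1) - FF x = (x + 1 - x) * (- gg z)"
    using MVT2[of x "x+1" FF "\<lambda>y. - gg y"] FF_deriv x by auto
  have "FF x - FF (x + 1) = gg z" using z by simp
  moreover have "gg (x + 1) \<le> gg z" "gg z \<le> gg x" using z x by (auto intro!: gg_mono)
  ultimately show "gg (x + 1) \<le> FF x - FF (x + 1)" "FF x - FF (x + 1) \<le> gg x" by auto
qed

lemma FF_lim: assumes c: "c > 0" shows "(\<lambda>n. FF (real n + c)) \<longlonglongrightarrow> 0"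
proof -
  have "filterlim (\<lambda>n. c + real n) at_top sequentially"
    by (rule filterlim_tendsto_add_at_top[OF tendsto_const filterlim_real_sequentially])
  then have "filterlim (\<lambda>n. real n + c) at_top sequentially" by (simp add: add.commute)
  then have "filterlim (\<lambda>n. ln (real n + c)) at_top sequentially"
    by (rule filterlim_compose[OF ln_at_top])
  then have "(\<lambda>n. ln (real n + c) powr (1 - s)) \<longlonglongrightarrow> 0"
    using s1 by (intro tendsto_neg_powr) auto
  then show ?thesis unfolding FF_def by (intro tendsto_divide_zero)
qed

lemma tele: assumes c: "c > 0" shows "(\<lambda>n. FF (real n + c) - FF (real n + c + 1)) sums FF c"
  using telescope_sums'[OF FF_lim[OF c]] by (simp add: add_ac)

lemma tail_summable: assumes "c \<ge> 2" shows "summable (\<lambda>n. gg (real n + c))"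
proof (rule summable_comparison_test'[where N=1])
  show "summable (\<lambda>n. FF (real n + (c - 1)) - FF (real n + (c - 1) + 1))"
    using tele[of "c - 1"] assms sums_summable by force
  fix n :: nat assume n: "n \<ge> 1"
  have "gg (real n + (c - 1) + 1) \<le> FF (real n + (c - 1)) - FF (real n + (c - 1) + 1)"
    using assms n by (intro FG) auto
  moreover have "gg (real n + c) \<ge> 0" using assms unfolding gg_def by simp
  ultimately show "norm (gg (real n + c)) \<le> FF (real n + (c - 1)) - FF (real n + (c - 1) + 1)"
    by (simp add: algebra_simps)
qed

lemma tail_upper: assumes "c \<ge> 3" shows "(\<Sum>n. gg (real n + c)) \<le> FF (c - 1)"
proof -
  have "(\<Sum>n. gg (real n + c)) \<le> (\<Sum>n. FF (real n + (c - 1)) - FF (real n + (c - 1) + 1))"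
  proof (rule suminf_le)
    fix n :: nat
    show "gg (real n + c) \<le> FF (real n + (c - 1)) - FF (real n + (c - 1) + 1)"
      using FG(1)[of "real n + (c - 1)"] assms by (simp add: algebra_simps)
    show "summable (\<lambda>n. gg (real n + c))" using tail_summable[of c] assms by simp
    show "summable (\<lambda>n. FF (real n + (c - 1)) - FF (real n + (c - 1) + 1))"
      using tele[of "c - 1"] assms sums_summable by force
  qed
  also have "\<dots> = FF (c - 1)" using tele[of "c - 1"] assms sums_unique by force
  finally show ?thesis .
qed

lemma tail_lower: assumes "c \<ge> 2" shows "FF c \<le> (\<Sum>n. gg (real n + c))"
proof -
  have "FF c = (\<Sum>n. FF (real n + c) - FF (real n + c + 1))" using tele[of c] assms sums_unique by force
  also have "\<dots> \<le> (\<Sum>n. gg (real n + c))"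
  proof (rule suminf_le)
    fix n :: nat
    show "FF (real n + c) - FF (real n + c + 1) \<le> gg (real n + c)"
      using FG(2)[of "real n + c"] assms by simp
    show "summable (\<lambda>n. gg (real n + c))" using tail_summable[of c] assms by simp
    show "summable (\<lambda>n. FF (real n + c) - FF (real n + c + 1))"
      using tele[of c] assms sums_summable by force
  qed
  finally show ?thesis .
qed

end


definition Rr :: "(nat \<Rightarrow> real) \<Rightarrow> nat \<Rightarrow> real" where
  "Rr a n = 1 - (\<Sum>k\<in>{1..n}. a k)"
definition Ll :: "(nat \<Rightarrow> real) \<Rightarrow> nat \<Rightarrow> real" where
  "Ll a n = Rr a n / 2 ^ n"

lemma Rr_Suc: "Rr a (Suc n) = Rr a n - a (Suc n)"
  by (simp add: Rr_def)

lemma ivl_len: "p \<in> cantor_ivls a n \<Longrightarrow> snd p - fst p = Ll a n"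
proof (induction n arbitrary: p)
  case 0 then show ?case by (simp add: Ll_def Rr_def)
next
  case (Suc n)
  then obtain q where q: "q \<in> cantor_ivls a n" and
    p: "p = (fst q, (fst q + snd q) / 2 - a (Suc n) / 2 ^ Suc n) \<or>
        p = ((fst q + snd q) / 2 + a (Suc n) / 2 ^ Suc n, snd q)" by auto
  have "snd q - fst q = Ll a n" using Suc.IH q by blast
  then have sq: "snd q = fst q + Rr a n / 2 ^ n" by (simp add: Ll_def)
  from p show ?case
  proof
    assume "p = (fst q, (fst q + snd q) / 2 - a (Suc n) / 2 ^ Suc n)"
    then show ?thesis by (simp add: sq Ll_def Rr_Suc field_simps)
  next
    assume "p = ((fst q + snd q) / 2 + a (Suc n) / 2 ^ Suc n, snd q)"
    then show ?thesis by (simp add: sq Ll_def Rr_Suc field_simps)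
  qed
qed

lemma ivls_finite: "finite (cantor_ivls a n)"
  by (induction n) auto

lemma ivls_card: "card (cantor_ivls a n) \<le> 2 ^ n"
proof (induction n)
  case 0 then show ?case by simp
next
  case (Suc n)
  have "card (cantor_ivls a (Suc n)) \<le> (\<Sum>p\<in>cantor_ivls a n. card {(fst p, (fst p + snd p) / 2 - a (Suc n) / 2 ^ Suc n),
         ((fst p + snd p) / 2 + a (Suc n) / 2 ^ Suc n, snd p)})"
    by (simp only: cantor_ivls.simps) (rule card_UN_le[OF ivls_finite])
  also have "\<dots> \<le> (\<Sum>p\<in>cantor_ivls a n. 2)"
    by (intro sum_mono) (simp add: card_insert_if)
  also have "\<dots> \<le> 2 ^ Suc n" using Suc by simp
  finally show ?case .
qed

context
  fixes a :: "nat \<Rightarrow> real"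
  assumes apos: "\<And>k. a k \<ge> 0" and Rpos: "\<And>n. Rr a n > 0"
begin

lemma Ll_pos: "Ll a n > 0" using Rpos by (simp add: Ll_def)

lemma fst_le_snd: "p \<in> cantor_ivls a n \<Longrightarrow> fst p \<le> snd p"
  using ivl_len[of p a n] Ll_pos[of n] by simp

lemma E1: "p \<in> cantor_ivls a n \<Longrightarrow> (\<exists>q\<in>cantor_ivls a (n+j). fst q = fst p) \<and> (\<exists>q\<in>cantor_ivls a (n+j). snd q = snd p)"
proof (induction j)
  case 0 then show ?case by auto
next
  case (Suc j)
  then obtain q1 q2 where q1: "q1 \<in> cantor_ivls a (n+j)" "fst q1 = fst p"
    and q2: "q2 \<in> cantor_ivls a (n+j)" "snd q2 = snd p" by blast
  show ?case
  proof
    show "\<exists>q\<in>cantor_ivls a (n + Suc j). fst q = fst p"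
    proof (rule bexI)
      show "(fst q1, (fst q1 + snd q1) / 2 - a (Suc (n+j)) / 2 ^ Suc (n+j)) \<in> cantor_ivls a (n + Suc j)"
        by (simp only: add_Suc_right cantor_ivls.simps) (rule UN_I[OF q1(1)], simp)
    qed (simp add: q1)
    show "\<exists>q\<in>cantor_ivls a (n + Suc j). snd q = snd p"
    proof (rule bexI)
      show "((fst q2 + snd q2) / 2 + a (Suc (n+j)) / 2 ^ Suc (n+j), snd q2) \<in> cantor_ivls a (n + Suc j)"
        by (simp only: add_Suc_right cantor_ivls.simps) (rule UN_I[OF q2(1)], simp)
    qed (simp add: q2)
  qed
qed

lemma E2: "p \<in> cantor_ivls a (m+j) \<Longrightarrow> \<exists>q\<in>cantor_ivls a m. fst q \<le> fst p \<and> snd p \<le> snd q"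
proof (induction j arbitrary: p)
  case 0 then show ?case by auto
next
  case (Suc j)
  then obtain q where q: "q \<in> cantor_ivls a (m+j)" and
    p: "p = (fst q, (fst q + snd q) / 2 - a (Suc (m+j)) / 2 ^ Suc (m+j)) \<or>
        p = ((fst q + snd q) / 2 + a (Suc (m+j)) / 2 ^ Suc (m+j), snd q)" by auto
  have le: "fst q \<le> snd q" using fst_le_snd q by blast
  define d where "d = a (Suc (m+j)) / 2 ^ Suc (m+j)"
  have d: "d \<ge> 0" using apos by (simp add: d_def)
  from p have "fst q \<le> fst p \<and> snd p \<le> snd q"
  proof
    assume "p = (fst q, (fst q + snd q) / 2 - a (Suc (m+j)) / 2 ^ Suc (m+j))"
    then have "p = (fst q, (fst q + snd q) / 2 - d)" by (simp add: d_def)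
    then show ?thesis using le d by (auto simp: field_simps)
  next
    assume "p = ((fst q + snd q) / 2 + a (Suc (m+j)) / 2 ^ Suc (m+j), snd q)"
    then have "p = ((fst q + snd q) / 2 + d, snd q)" by (simp add: d_def)
    then show ?thesis using le d by (auto simp: field_simps)
  qed
  moreover obtain q' where "q' \<in> cantor_ivls a m" "fst q' \<le> fst q" "snd q \<le> snd q'" using Suc.IH q by blast
  ultimately show ?case by (intro bexI[of _ q']) auto
qed

lemma endpoints_in_K:
  assumes "p \<in> cantor_ivls a n"
  shows "fst p \<in> cantor_set a" "snd p \<in> cantor_set a"
proof -
  have "fst p \<in> cantor_stage a m \<and> snd p \<in> cantor_stage a m" for m
  proof (cases "n \<le> m")
    case True
    then obtain j where j: "m = n + j" using le_Suc_ex by blast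
    from E1[OF assms, of j] obtain q1 q2 where
      "q1 \<in> cantor_ivls a m" "fst q1 = fst p" "q2 \<in> cantor_ivls a m" "snd q2 = snd p" using j by blast
    moreover have "fst q1 \<le> snd q1" "fst q2 \<le> snd q2" using fst_le_snd calculation by blast+
    ultimately have "fst p \<in> {fst q1..snd q1}" "snd p \<in> {fst q2..snd q2}" by auto
    then show ?thesis unfolding cantor_stage_def using \<open>q1 \<in> _\<close> \<open>q2 \<in> _\<close> by blast
  next
    case False
    then obtain j where j: "n = m + j" using le_Suc_ex[of m n] by auto
    from E2[of p m j] assms j obtain q where "q \<in> cantor_ivls a m" "fst q \<le> fst p" "snd p \<le> snd q" by blast
    moreover have "fst p \<le> snd p" using fst_le_snd assms by blast
    ultimately have "fst p \<in> {fst q..snd q}" "snd p \<in> {fst q..snd q}" by auto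
    then show ?thesis unfolding cantor_stage_def using \<open>q \<in> _\<close> by blast
  qed
  then show "fst p \<in> cantor_set a" "snd p \<in> cantor_set a" unfolding cantor_set_def by auto
qed

lemma K_ne: "cantor_set a \<noteq> {}"
  using endpoints_in_K(1)[of "(0,1)" 0] by auto

lemma infdist_lessE: "(A::real set) \<noteq> {} \<Longrightarrow> infdist x A < t \<Longrightarrow> \<exists>y\<in>A. dist x y < t"
  by (simp add: infdist_notempty cINF_less_iff)

lemma nbhd_open: "open (cantor_nbhd a t)"
  unfolding cantor_nbhd_def
  by (intro open_Collect_less continuous_intros)

lemma nbhd_sub: "cantor_nbhd a t \<subseteq> (\<Union>p\<in>cantor_ivls a m. {fst p - t .. snd p + t})"
proof
  fix x assume "x \<in> cantor_nbhd a t"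
  then obtain y where y: "y \<in> cantor_set a" "dist x y < t"
    using infdist_lessE[OF K_ne] unfolding cantor_nbhd_def by blast
  then have "y \<in> cantor_stage a m" unfolding cantor_set_def by blast
  then obtain p where "p \<in> cantor_ivls a m" "y \<in> {fst p .. snd p}" unfolding cantor_stage_def by blast
  then show "x \<in> (\<Union>p\<in>cantor_ivls a m. {fst p - t .. snd p + t})"
    using y(2) by (intro UN_I[of p]) (auto simp: dist_real_def)
qed

lemma big_compact: "compact (\<Union>p\<in>cantor_ivls a m. {fst p - t .. snd p + t})"
  by (intro compact_UN ivls_finite) auto

lemma nbhd_sets: "cantor_nbhd a t \<in> sets lebesgue"
  using nbhd_open[of t] by simp

lemma nbhd_fmeas: "cantor_nbhd a t \<in> fmeasurable lebesgue"
  by (rule fmeasurableI2[OF lmeasurable_compact[OF big_compact] nbhd_sub nbhd_sets])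

lemma upper:
  assumes "t > 0"
  shows "measure lebesgue (cantor_nbhd a t) \<le> Rr a m + 2 ^ (m+1) * t"
proof -
  have "measure lebesgue (cantor_nbhd a t) \<le> measure lebesgue (\<Union>p\<in>cantor_ivls a m. {fst p - t .. snd p + t})"
    by (rule measure_mono_fmeasurable[OF nbhd_sub nbhd_sets lmeasurable_compact[OF big_compact]])
  also have "\<dots> \<le> (\<Sum>p\<in>cantor_ivls a m. measure lebesgue {fst p - t .. snd p + t})"
    by (rule measure_UNION_le[OF ivls_finite]) auto
  also have "\<dots> = (\<Sum>p\<in>cantor_ivls a m. Ll a m + 2 * t)"
  proof (intro sum.cong refl)
    fix p assume p: "p \<in> cantor_ivls a m"
    show "measure lebesgue {fst p - t .. snd p + t} = Ll a m + 2 * t"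
      using ivl_len[OF p] fst_le_snd[OF p] assms by simp
  qed
  also have "\<dots> = card (cantor_ivls a m) * (Ll a m + 2 * t)" by simp
  also have "\<dots> \<le> 2 ^ m * (Ll a m + 2 * t)"
  proof (rule mult_right_mono)
    show "real (card (cantor_ivls a m)) \<le> 2 ^ m"
      using ivls_card[of a m] by (metis of_nat_le_iff of_nat_numeral of_nat_power)
    show "0 \<le> Ll a m + 2 * t" using Ll_pos[of m] assms by simp
  qed
  also have "\<dots> = Rr a m + 2 ^ (m+1) * t" by (simp add: Ll_def field_simps)
  finally show ?thesis .
qed

definition G :: "nat \<Rightarrow> real set" where
  "G k = (\<Union>p\<in>cantor_ivls a k. {(fst p + snd p) / 2 - a (Suc k) / 2 ^ Suc k <..< (fst p + snd p) / 2 + a (Suc k) / 2 ^ Suc k})"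

lemma stage_step: "cantor_stage a n \<subseteq> cantor_stage a (Suc n) \<union> G n"
proof
  fix x assume "x \<in> cantor_stage a n"
  then obtain p where p: "p \<in> cantor_ivls a n" "x \<in> {fst p .. snd p}" unfolding cantor_stage_def by blast
  define m where "m = (fst p + snd p) / 2"
  define d where "d = a (Suc n) / 2 ^ Suc n"
  have i1: "(fst p, m - d) \<in> cantor_ivls a (Suc n)"
    unfolding m_def d_def by (simp only: cantor_ivls.simps) (rule UN_I[OF p(1)], simp)
  have i2: "(m + d, snd p) \<in> cantor_ivls a (Suc n)"
    unfolding m_def d_def by (simp only: cantor_ivls.simps) (rule UN_I[OF p(1)], simp)
  consider "x \<le> m - d" | "x \<ge> m + d" | "m - d < x \<and> x < m + d" by linarith
  then show "x \<in> cantor_stage a (Suc n) \<union> G n"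
  proof cases
    case 1 then have "x \<in> {fst (fst p, m - d) .. snd (fst p, m - d)}" using p(2) by simp
    then show ?thesis using i1 unfolding cantor_stage_def by blast
  next
    case 2 then have "x \<in> {fst (m + d, snd p) .. snd (m + d, snd p)}" using p(2) by simp
    then show ?thesis using i2 unfolding cantor_stage_def by blast
  next
    case 3 then have "x \<in> {m - d <..< m + d}" by simp
    then have "x \<in> G n" unfolding G_def m_def d_def by (rule UN_I[OF p(1)])
    then show ?thesis by blast
  qed
qed

lemma cover: "{0..1} \<subseteq> cantor_stage a n \<union> (\<Union>k<n. G k)"
proof (induction n)
  case 0 then show ?case by (simp add: cantor_stage_def)
next
  case (Suc n)
  then show ?case using stage_step[of n] by (auto simp: lessThan_Suc)
qed

lemma G_meas: "measure lebesgue (G k) \<le> a (Suc k)"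
proof -
  have "measure lebesgue (G k) \<le> (\<Sum>p\<in>cantor_ivls a k. measure lebesgue {(fst p + snd p) / 2 - a (Suc k) / 2 ^ Suc k <..< (fst p + snd p) / 2 + a (Suc k) / 2 ^ Suc k})"
    unfolding G_def by (rule measure_UNION_le[OF ivls_finite]) auto
  also have "\<dots> = (\<Sum>p\<in>cantor_ivls a k. 2 * a (Suc k) / 2 ^ Suc k)"
    using apos[of "Suc k"] by (intro sum.cong refl) simp
  also have "\<dots> = card (cantor_ivls a k) * (2 * a (Suc k) / 2 ^ Suc k)" by simp
  also have "\<dots> \<le> 2 ^ k * (2 * a (Suc k) / 2 ^ Suc k)"
  proof (rule mult_right_mono)
    show "real (card (cantor_ivls a k)) \<le> 2 ^ k"
      using ivls_card[of a k] by (metis of_nat_le_iff of_nat_numeral of_nat_power)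
    show "0 \<le> 2 * a (Suc k) / 2 ^ Suc k" using apos[of "Suc k"] by simp
  qed
  also have "\<dots> = a (Suc k)" by simp
  finally show ?thesis .
qed

lemma stage_compact: "compact (cantor_stage a n)"
  unfolding cantor_stage_def by (intro compact_UN ivls_finite) auto

lemma stage_lmeas: "cantor_stage a n \<in> lmeasurable"
  by (rule lmeasurable_compact[OF stage_compact])

lemma G_lmeas: "G k \<in> lmeasurable"
  unfolding G_def by (intro fmeasurable.finite_UN ivls_finite) auto

lemma UG_lmeas: "(\<Union>k<n. G k) \<in> lmeasurable"
  by (intro fmeasurable.finite_UN G_lmeas) auto

lemma stage_meas: "Rr a n \<le> measure lebesgue (cantor_stage a n)"
proof -
  have "1 = measure lebesgue {0..1::real}" by simp
  also have "\<dots> \<le> measure lebesgue (cantor_stage a n \<union> (\<Union>k<n. G k))"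
    by (rule measure_mono_fmeasurable[OF cover]) (simp, rule fmeasurable.Un[OF stage_lmeas UG_lmeas])
  also have "\<dots> \<le> measure lebesgue (cantor_stage a n) + measure lebesgue (\<Union>k<n. G k)"
    by (rule measure_Un_le[OF fmeasurableD[OF stage_lmeas] fmeasurableD[OF UG_lmeas]])
  also have "\<dots> \<le> measure lebesgue (cantor_stage a n) + (\<Sum>k<n. measure lebesgue (G k))"
    by (intro add_left_mono measure_UNION_le) (auto intro: fmeasurableD[OF G_lmeas])
  also have "\<dots> \<le> measure lebesgue (cantor_stage a n) + (\<Sum>k<n. a (Suc k))"
    using G_meas by (intro add_left_mono sum_mono) auto
  also have "(\<Sum>k<n. a (Suc k)) = (\<Sum>k\<in>{1..n}. a k)"
    by (induction n) auto
  finally show ?thesis unfolding Rr_def by simp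
qed

lemma lower:
  assumes "Ll a n < 2 * t"
  shows "Rr a n \<le> measure lebesgue (cantor_nbhd a t)"
proof -
  have "cantor_stage a n \<subseteq> cantor_nbhd a t"
  proof
    fix x assume "x \<in> cantor_stage a n"
    then obtain p where p: "p \<in> cantor_ivls a n" "x \<in> {fst p .. snd p}" unfolding cantor_stage_def by blast
    have len: "snd p - fst p = Ll a n" using ivl_len[OF p(1)] .
    have "x - fst p \<le> Ll a n / 2 \<or> snd p - x \<le> Ll a n / 2" using len by linarith
    then have "infdist x (cantor_set a) \<le> Ll a n / 2"
    proof
      assume "x - fst p \<le> Ll a n / 2"
      then show ?thesis using p(2) by (intro infdist_le2[OF endpoints_in_K(1)[OF p(1)]]) (auto simp: dist_real_def)
    next
      assume "snd p - x \<le> Ll a n / 2"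
      then show ?thesis using p(2) by (intro infdist_le2[OF endpoints_in_K(2)[OF p(1)]]) (auto simp: dist_real_def)
    qed
    then show "x \<in> cantor_nbhd a t" using assms unfolding cantor_nbhd_def by simp
  qed
  then have "measure lebesgue (cantor_stage a n) \<le> measure lebesgue (cantor_nbhd a t)"
    by (rule measure_mono_fmeasurable[OF _ fmeasurableD[OF stage_lmeas] nbhd_fmeas])
  then show ?thesis using stage_meas[of n] by linarith
qed

end


theorem lemma4p5:
  fixes s :: real
  assumes "s > 1"
  defines "\<eta> \<equiv> (\<Sum>k. 1 / ((real (Suc k) + 1) * (ln (real (Suc k) + 1)) powr s))"
  defines "a \<equiv> (\<lambda>k::nat. (1 / \<eta>) * (1 / ((real k + 1) * (ln (real k + 1)) powr s)))"
  shows "\<exists>c1 c2 b t0. c1 > 0 \<and> c2 > 0 \<and> b > 0 \<and> t0 > 0 \<and>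
           (\<forall>t. 0 < t \<and> t \<le> t0 \<longrightarrow> ln (ln (b / t)) > 0) \<and>
           (\<forall>t. 0 < t \<and> t \<le> t0 \<longrightarrow>
              c1 * (ln (ln (b / t))) powr (1 - s) \<le> measure lebesgue (cantor_nbhd a t) \<and>
              measure lebesgue (cantor_nbhd a t) \<le> c2 * (ln (ln (b / t))) powr (1 - s))"
proof -
  have s1: "s > 1" using assms(1) .
  define h where "h = (\<lambda>k::nat. 1 / ((real (Suc k) + 1) * (ln (real (Suc k) + 1)) powr s))"
  have h_gg: "h k = gg s (real k + 2)" for k
  proof -
    have e: "real (Suc k) + 1 = real k + 2" by simp
    show ?thesis unfolding h_def by (simp only: e) (simp add: gg_def[OF s1])
  qed
  have h_fun: "h = (\<lambda>k. gg s (real k + 2))" by (rule ext) (rule h_gg)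
  have h_pos: "h k > 0" for k
    unfolding h_def by simp
  have h_sum: "summable h"
    using tail_summable[OF s1, of 2] by (simp add: h_fun)
  have eta: "\<eta> = suminf h" unfolding \<eta>_def h_def ..
  have eta_pos: "\<eta> > 0" using suminf_pos[OF h_sum h_pos] eta by simp
  define T where "T m = (\<Sum>n. h (n + m))" for m
  have T_pos: "T m > 0" for m
    unfolding T_def using h_pos summable_ignore_initial_segment[OF h_sum, of m] by (intro suminf_pos) auto
  have T_gg: "T m = (\<Sum>n. gg s (real n + (real m + 2)))" for m
    unfolding T_def by (simp add: h_gg add.assoc)
  have T_low: "FF s (real m + 2) \<le> T m" for m
    using tail_lower[OF s1, of "real m + 2"] by (simp add: T_gg)
  have T_up: "m \<ge> 1 \<Longrightarrow> T m \<le> FF s (real m + 1)" for m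
    using tail_upper[OF s1, of "real m + 2"] by (simp add: T_gg add.commute)
  have a_suc: "a (Suc i) = h i / \<eta>" for i
    by (simp add: a_def h_def)
  have apos: "a k \<ge> 0" for k
    unfolding a_def using eta_pos by simp
  have sumeq: "(\<Sum>k\<in>{1..m}. a k) = (\<Sum>i<m. a (Suc i))" for m
    by (induction m) auto
  have R_T: "Rr a m = T m / \<eta>" for m
  proof -
    have "\<eta> = T m + (\<Sum>i<m. h i)" unfolding eta T_def by (rule suminf_split_initial_segment[OF h_sum])
    moreover have "(\<Sum>k\<in>{1..m}. a k) = (\<Sum>i<m. h i) / \<eta>"
      unfolding sumeq a_suc by (simp add: sum_divide_distrib)
    ultimately show ?thesis unfolding Rr_def using eta_pos by (simp add: field_simps)
  qed
  have Rpos: "Rr a n > 0" for n using R_T T_pos eta_pos by simp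
  have Rle1: "Rr a n \<le> 1" for n
    unfolding Rr_def using apos by (simp add: sum_nonneg)
  define D where "D = (s - 1) * \<eta>"
  have Dpos: "D > 0" unfolding D_def using s1 eta_pos by simp
  have RL: "ln (real m + 2) powr (1 - s) / D \<le> Rr a m" for m
  proof -
    have "ln (real m + 2) powr (1 - s) / (s - 1) \<le> T m" using T_low[of m] unfolding FF_def[OF s1] .
    then have "ln (real m + 2) powr (1 - s) / (s - 1) / \<eta> \<le> T m / \<eta>"
      using eta_pos by (intro divide_right_mono) auto
    then show ?thesis unfolding R_T D_def by (simp add: divide_divide_eq_left)
  qed
  have RU: "Rr a m \<le> ln (real m + 1) powr (1 - s) / D" if m1: "m \<ge> 1" for m
  proof -
    have "T m \<le> ln (real m + 1) powr (1 - s) / (s - 1)" using T_up[OF m1] unfolding FF_def[OF s1] .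
    then have "T m / \<eta> \<le> ln (real m + 1) powr (1 - s) / (s - 1) / \<eta>"
      using eta_pos by (intro divide_right_mono) auto
    then show ?thesis unfolding R_T D_def by (simp add: divide_divide_eq_left)
  qed
  have ln2_half: "ln (2::real) \<ge> 1/2"
  proof -
    have ee: "exp (1/2::real) * exp (1/2) = exp 1" by (simp add: exp_add[symmetric])
    have "exp (1/2::real) \<le> 2"
    proof (rule ccontr)
      assume "\<not> exp (1/2::real) \<le> 2"
      then have "2 * 2 < exp (1/2::real) * exp (1/2)" by (intro mult_strict_mono) auto
      then show False using ee exp_le by simp
    qed
    then have "ln (exp (1/2::real)) \<le> ln 2" by (subst ln_le_cancel_iff) auto
    then show ?thesis by simp
  qed
  define X0 where "X0 = max (max (4 * s^2) (2 * (\<bar>ln D\<bar> + s))) 3"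
  define t0 where "t0 = exp (- X0)"
  have key: "ln (ln (1 / t)) > 0 \<and>
      2 powr (1 - s) / D * (ln (ln (1 / t))) powr (1 - s) \<le> measure lebesgue (cantor_nbhd a t) \<and>
      measure lebesgue (cantor_nbhd a t) \<le> 2 * 2 powr (s - 1) / D * (ln (ln (1 / t))) powr (1 - s)"
    if t: "0 < t" "t \<le> t0" for t
  proof -
    define X where "X = ln (1 / t)"
    have "ln t \<le> - X0" using t unfolding t0_def by (metis ln_exp ln_le_cancel_iff exp_gt_zero)
    then have XX0: "X \<ge> X0" unfolding X_def using t by (simp add: ln_div)
    have X0a: "3 \<le> X0" and X0b: "4 * s^2 \<le> X0" and X0c: "2 * (\<bar>ln D\<bar> + s) \<le> X0"
      unfolding X0_def by (simp_all add: le_max_iff_disj)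
    have X3: "X \<ge> 3" using XX0 X0a by linarith
    have X4s: "X \<ge> 4 * s^2" using XX0 X0b by linarith
    have XD: "X \<ge> 2 * (\<bar>ln D\<bar> + s)" using XX0 X0c by linarith
    define l where "l = ln X"
    have lpos: "l > 0" unfolding l_def using X3 by simp
    have "exp (- X0) \<le> exp (-3)" unfolding X0_def by simp
    moreover have "exp (-3::real) \<le> 1/4"
    proof -
      have "4 \<le> exp (3::real)" using exp_ge_add_one_self[of 3] by simp
      then show ?thesis by (simp add: exp_minus field_simps)
    qed
    ultimately have t4: "t \<le> 1/4" using t unfolding t0_def by linarith
    obtain n0 where "(1/2::real) ^ n0 < 2 * t" using real_arch_pow_inv[of "2*t" "1/2"] t by auto
    moreover have "Ll a n0 \<le> 1 / 2 ^ n0" unfolding Ll_def using Rle1[of n0] by (intro divide_right_mono) auto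
    moreover have "(1/2::real) ^ n0 = 1 / 2 ^ n0" by (simp add: power_divide)
    ultimately have ex: "Ll a n0 < 2 * t" by linarith
    define n where "n = (LEAST n. Ll a n < 2 * t)"
    have nL: "Ll a n < 2 * t" unfolding n_def by (rule LeastI[of _ n0], rule ex)
    have n0': "n \<noteq> 0"
    proof
      assume "n = 0"
      then have "Ll a 0 < 2 * t" using nL by simp
      moreover have "Ll a 0 = 1" by (simp add: Ll_def Rr_def)
      ultimately show False using t4 by simp
    qed
    then obtain m where nm: "n = Suc m" using not0_implies_Suc by blast
    have mL: "\<not> Ll a m < 2 * t" unfolding n_def using nm n_def not_less_Least[of m "\<lambda>n. Ll a n < 2 * t"] by simp
    have i1: "2 ^ n * t \<le> Rr a m"
      using mL nm unfolding Ll_def by (simp add: field_simps)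
    have "2 ^ n * t \<le> 1" using i1 Rle1[of m] by linarith
    then have "ln (2 ^ n * t) \<le> 0" using t by simp
    then have "real n * ln 2 + ln t \<le> 0" using t by (simp add: ln_mult ln_realpow)
    then have "real n * ln 2 \<le> X" unfolding X_def using t by (simp add: ln_div)
    moreover have "real n * (1/2) \<le> real n * ln 2" using ln2_half by (intro mult_left_mono) auto
    ultimately have "real n \<le> 2 * X" by linarith
    moreover have "X * X \<ge> 3 * X" using X3 by (intro mult_right_mono) auto
    ultimately have nX: "real n + 2 \<le> X^2" using X3 unfolding power2_eq_square by linarith
    have "ln (real n + 2) \<le> ln (X^2)" using nX X3 by (subst ln_le_cancel_iff) auto
    also have "ln (X^2) = 2 * l" unfolding l_def using X3 by (simp add: ln_realpow)
    finally have ln_n2: "ln (real n + 2) \<le> 2 * l" .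
    have Rn: "Rr a n < 2 ^ (n+1) * t" using nL unfolding Ll_def by (simp add: field_simps)
    have lnn2: "ln (real n + 2) > 0" by simp
    have r1: "ln (real n + 2) powr (1 - s) \<le> D * Rr a n"
      using RL[of n] Dpos by (simp add: pos_divide_le_eq mult.commute)
    have r2: "D * Rr a n < D * (2 ^ (n+1) * t)" by (rule mult_strict_left_mono[OF Rn Dpos])
    have "ln (real n + 2) powr (1 - s) < D * (2 ^ (n+1) * t)" using r1 r2 by linarith
    then have "ln (ln (real n + 2) powr (1 - s)) < ln (D * (2 ^ (n+1) * t))"
      using lnn2 Dpos t(1) by (intro ln_less_cancel_iff[THEN iffD2]) auto
    then have A: "(1 - s) * ln (ln (real n + 2)) < ln D + (real n + 1) * ln 2 + ln t"
      using lnn2 Dpos t by (simp add: ln_powr ln_mult ln_realpow algebra_simps)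
    have "ln (ln (real n + 2)) \<le> ln (real n + 2)" using lnn2 ln_bound by blast
    also have "ln (real n + 2) \<le> real n + 1" using ln_le_minus_one[of "real n + 2"] by simp
    finally have "(1 - s) * (real n + 1) \<le> (1 - s) * ln (ln (real n + 2))"
      using s1 by (intro mult_left_mono_neg) auto
    moreover have "ln 2 \<le> (1::real)" using ln_le_minus_one[of 2] by simp
    then have "(real n + 1) * ln 2 \<le> real n + 1" by (simp add: mult_left_le)
    moreover have "ln t = - X" unfolding X_def using t by (simp add: ln_div)
    ultimately have "X < ln D + (real n + 1) * s" using A by (simp add: algebra_simps)
    then have ns: "real n * s > X / 2" using XD by (simp add: algebra_simps)
    have sq: "sqrt X * sqrt X = X" using X3 by simp
    have "sqrt X \<ge> 2 * s"
      using real_sqrt_le_mono[OF X4s] s1 by (simp add: real_sqrt_mult)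
    then have "s * sqrt X \<le> (sqrt X / 2) * sqrt X" using X3 by (intro mult_right_mono) auto
    then have "X / 2 \<ge> s * sqrt X" using sq by simp
    then have "real n * s > s * sqrt X" using ns by linarith
    then have n_sqrt: "real n > sqrt X" using s1 by (simp add: mult.commute)
    have "sqrt X \<ge> 1" using X3 by simp
    then have "n \<ge> 2" using n_sqrt by linarith
    then have m1: "m \<ge> 1" using nm by simp
    have "ln (real n) > ln (sqrt X)" using n_sqrt X3 n0' by (intro ln_less_cancel_iff[THEN iffD2]) auto
    then have ln_n: "ln (real n) > l / 2" unfolding l_def using X3 by (simp add: ln_sqrt)
    have low: "Rr a n \<le> measure lebesgue (cantor_nbhd a t)"
      by (rule lower[OF apos Rpos nL])
    have up: "measure lebesgue (cantor_nbhd a t) \<le> Rr a m + 2 ^ (m+1) * t"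
      by (rule upper[OF apos Rpos t(1)])
    have "2 powr (1 - s) / D * l powr (1 - s) = (2 * l) powr (1 - s) / D"
      using lpos by (simp add: powr_mult)
    also have "\<dots> \<le> ln (real n + 2) powr (1 - s) / D"
      using ln_n2 lnn2 s1 Dpos by (intro divide_right_mono powr_mono2') auto
    also have "\<dots> \<le> measure lebesgue (cantor_nbhd a t)" using RL[of n] low by linarith
    finally have L: "2 powr (1 - s) / D * l powr (1 - s) \<le> measure lebesgue (cantor_nbhd a t)" .
    have "measure lebesgue (cantor_nbhd a t) \<le> 2 * Rr a m" using up i1 nm by simp
    also have "\<dots> \<le> 2 * (ln (real m + 1) powr (1 - s) / D)" using RU[OF m1] by simp
    also have "ln (real m + 1) = ln (real n)" using nm by simp
    also have "ln (real n) powr (1 - s) \<le> (l / 2) powr (1 - s)"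
      using ln_n lpos s1 by (intro powr_mono2') auto
    also have "(l / 2) powr (1 - s) = l powr (1 - s) * 2 powr (s - 1)"
    proof -
      have e: "2 powr (s - 1) = 1 / 2 powr (1 - s)" using powr_minus_divide[of 2 "1 - s"] by simp
      show ?thesis using lpos by (simp add: powr_divide e)
    qed
    finally have U: "measure lebesgue (cantor_nbhd a t) \<le> 2 * 2 powr (s - 1) / D * l powr (1 - s)"
      using Dpos by (simp add: field_simps)
    show ?thesis using L U lpos unfolding l_def X_def by simp
  qed
  have c1pos: "0 < 2 powr (1 - s) / D" and c2pos: "0 < 2 * 2 powr (s - 1) / D" using Dpos by auto
  have t0pos: "0 < t0" unfolding t0_def by simp
  show ?thesis
    apply (rule exI[of _ "2 powr (1 - s) / D"], rule exI[of _ "2 * 2 powr (s - 1) / D"], rule exI[of _ 1], rule exI[of _ t0])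
    apply (intro conjI allI impI)
          apply (rule c1pos)
         apply (rule c2pos)
        apply (rule zero_less_one)
       apply (rule t0pos)
    using key by blast+
qed

end
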